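(* Let $\Theta\in\mathbb{R}^d$ denote a parameter vector and let $\ell:\mathcal{Z}\times\mathbb{R}^d\to[0,\infty)$ be a non-negative loss, differentiable in $\Theta$, with gradient $\nabla_{\Theta}\ell(z;\Theta)$. Let $(p^t)_{t\ge 0}$ and $p^*$ be probability densities on $\mathcal{Z}$ (with respect to a common reference measure $dz$), and set $c^t\triangleq\int|p^t(z)-p^*(z)|\,dz$. Assume: (i) (finite variance) there is $G>0$ such that for all $t$ and all $\Theta$, $\mathbb{E}_{Z\sim p^t}\big[\Vert\nabla_{\Theta}\ell(Z;\Theta)\Vert^2\big]\le G$; (ii) (convergence of the input distribution) $\sum_{t} c^t<\infty$. Then for all $\Theta$, $\mathbb{E}_{Z\sim p^*}\big[\Vert\nabla_{\Theta}\ell(Z;\Theta)\Vert^2\big]\le G$.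
   Context: This is the setting of a single module $j>1$ in a layer-wise ("greedy") training scheme: $p^t$ is the time-varying density at step $t$ of the input sample $Z=(X,Y)$ fed to the module (the output of the previous, still-training module together with the label), $p^*$ is the density of the previous module's output at convergence, and $\ell$ is the composition of the loss with the module and its auxiliary network, whose joint parameters are $\Theta$. *)

theory Defs
  imports "HOL-Analysis.Analysis"
begin

definition is_density :: "'z measure \<Rightarrow> ('z \<Rightarrow> real) \<Rightarrow> bool" where
  "is_density M p \<longleftrightarrow> p \<in> borel_measurable M \<and> (\<forall>z\<in>space M. 0 \<le> p z)
     \<and> integrable M p \<and> (\<integral>z. p z \<partial>M) = 1"

definition dens_expect :: "'z measure \<Rightarrow> ('z \<Rightarrow> real) \<Rightarrow> ('z \<Rightarrow> real) \<Rightarrow> ennreal" where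
  "dens_expect M p f = (\<integral>\<^sup>+ z. ennreal (p z * f z) \<partial>M)"

definition L1_dist :: "'z measure \<Rightarrow> ('z \<Rightarrow> real) \<Rightarrow> ('z \<Rightarrow> real) \<Rightarrow> real" where
  "L1_dist M p q = (\<integral>z. \<bar>p z - q z\<bar> \<partial>M)"

end

theory Submission
  imports Defs
begin

theorem lemma1:
  fixes M :: "'z measure"
    and loss :: "'z \<Rightarrow> 'd::euclidean_space \<Rightarrow> real"
    and grad :: "'z \<Rightarrow> 'd \<Rightarrow> 'd"
    and p :: "nat \<Rightarrow> 'z \<Rightarrow> real"
    and pstar :: "'z \<Rightarrow> real"
    and G :: real
  assumes nonneg: "\<And>z \<theta>. z \<in> space M \<Longrightarrow> 0 \<le> loss z \<theta>"
    and grad: "\<And>z \<theta>. z \<in> space M \<Longrightarrow> (loss z has_derivative (\<lambda>h. grad z \<theta> \<bullet> h)) (at \<theta>)"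
    and grad_meas: "\<And>\<theta>. (\<lambda>z. grad z \<theta>) \<in> borel_measurable M"
    and dens: "\<And>t. is_density M (p t)"
    and dens_star: "is_density M pstar"
    and G_pos: "G > 0"
    and var: "\<And>t \<theta>. dens_expect M (p t) (\<lambda>z. (norm (grad z \<theta>))\<^sup>2) \<le> ennreal G"
    and conv: "summable (\<lambda>t. L1_dist M (p t) pstar)"
  shows "\<forall>\<theta>. dens_expect M pstar (\<lambda>z. (norm (grad z \<theta>))\<^sup>2) \<le> ennreal G"
proof
  fix \<theta>
  define f where "f z = (norm (grad z \<theta>))\<^sup>2" for z
  have fm: "f \<in> borel_measurable M" unfolding f_def using grad_meas by measurable
  have pm: "p t \<in> borel_measurable M" for t using dens[of t] unfolding is_density_def by blast
  have psm: "pstar \<in> borel_measurable M" using dens_star unfolding is_density_def by blast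
  have pint: "integrable M (p t)" for t using dens[of t] unfolding is_density_def by blast
  have psint: "integrable M pstar" using dens_star unfolding is_density_def by blast
  define d where "d t z = \<bar>p t z - pstar z\<bar>" for t z
  have dm: "(\<lambda>z. ennreal (d t z)) \<in> borel_measurable M" for t
    unfolding d_def using pm psm by measurable
  have dint: "(\<integral>\<^sup>+ z. ennreal (d t z) \<partial>M) = ennreal (L1_dist M (p t) pstar)" for t
    unfolding d_def L1_dist_def
    by (rule nn_integral_eq_integral) (auto intro!: integrable_abs Bochner_Integration.integrable_diff pint psint)
  have L1nn: "0 \<le> L1_dist M (p t) pstar" for t
    unfolding L1_dist_def by simp
  have "(\<integral>\<^sup>+ z. (\<Sum>t. ennreal (d t z)) \<partial>M) = (\<Sum>t. ennreal (L1_dist M (p t) pstar))"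
    using nn_integral_suminf[of "\<lambda>t z. ennreal (d t z)", OF dm] dint by simp
  also have "\<dots> = ennreal (\<Sum>t. L1_dist M (p t) pstar)"
    using suminf_ennreal2[OF L1nn conv] .
  finally have fin: "(\<integral>\<^sup>+ z. (\<Sum>t. ennreal (d t z)) \<partial>M) \<noteq> \<infinity>" by simp
  have AEfin: "AE z in M. (\<Sum>t. ennreal (d t z)) \<noteq> \<infinity>"
    by (rule nn_integral_PInf_AE[OF _ fin]) (use dm in measurable)
  have AElim: "AE z in M. (\<lambda>t. p t z) \<longlonglongrightarrow> pstar z"
  proof (rule AE_mp[OF AEfin], intro AE_I2 impI)
    fix z assume "(\<Sum>t. ennreal (d t z)) \<noteq> \<infinity>"
    then have "summable (\<lambda>t. d t z)"
      by (intro summable_suminf_not_top) (auto simp: d_def)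
    then have "(\<lambda>t. d t z) \<longlonglongrightarrow> 0" by (rule summable_LIMSEQ_zero)
    then have "(\<lambda>t. p t z - pstar z) \<longlonglongrightarrow> 0"
      unfolding d_def by (rule tendsto_rabs_zero_cancel)
    then show "(\<lambda>t. p t z) \<longlonglongrightarrow> pstar z" by (rule LIM_zero_cancel)
  qed
  have AEli: "AE z in M. liminf (\<lambda>t. ennreal (p t z * f z)) = ennreal (pstar z * f z)"
  proof (rule AE_mp[OF AElim], intro AE_I2 impI)
    fix z assume "(\<lambda>t. p t z) \<longlonglongrightarrow> pstar z"
    then have "(\<lambda>t. ennreal (p t z * f z)) \<longlonglongrightarrow> ennreal (pstar z * f z)"
      by (intro tendsto_ennrealI tendsto_mult tendsto_const)
    then show "liminf (\<lambda>t. ennreal (p t z * f z)) = ennreal (pstar z * f z)"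
      by (intro lim_imp_Liminf) auto
  qed
  have "dens_expect M pstar f = (\<integral>\<^sup>+ z. liminf (\<lambda>t. ennreal (p t z * f z)) \<partial>M)"
    unfolding dens_expect_def by (rule nn_integral_cong_AE) (use AEli in auto)
  also have "\<dots> \<le> liminf (\<lambda>t. \<integral>\<^sup>+ z. ennreal (p t z * f z) \<partial>M)"
    by (rule nn_integral_liminf) (use pm fm in measurable)
  also have "\<dots> \<le> ennreal G"
    using var[of _ \<theta>] unfolding dens_expect_def f_def
    by (intro Liminf_le always_eventually) auto
  finally show "dens_expect M pstar (\<lambda>z. (norm (grad z \<theta>))\<^sup>2) \<le> ennreal G"
    unfolding f_def .
qed

end
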